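(* Let $p_{ij}\ge0$ ($i,j\in\{1,2\}$) with $p_{11}+p_{12}\le1$, $p_{21}+p_{22}\le1$, let $\epsilon_1,\epsilon_2\ge0$, $c=(c_1,c_2)\in\mathbb{R}^2$, and $$P_1=\begin{pmatrix}p_{11}-\epsilon_1&p_{12}\\ p_{21}-\epsilon_2&p_{22}\end{pmatrix},\qquad P_2=\begin{pmatrix}p_{11}&p_{12}-\epsilon_1\\ p_{21}&p_{22}-\epsilon_2\end{pmatrix}.$$ Assume $\det(I-P_1)>0$ and $\det(I-P_2)>0$, and let $x=(I-P_1)^{-1}c$ and $y=(I-P_2)^{-1}c$. If $x_1\ge x_2$ and $y_2\ge y_1$, then $x=y$ and $x_1=x_2$ (so the common fixed point is a multiple of $(1,1)$). In particular, unless $x=y$ is a multiple of $(1,1)$, at most one of the conditions $x_1\ge x_2$ (the fixed point of $P_1$ lies in the region where $P_1$ is active) and $y_2\ge y_1$ (the fixed point of $P_2$ lies in the region where $P_2$ is active) holds.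
   Context: For a two-state fixed policy, the operator $x\mapsto c+\max\{\hat Px-\epsilon\max_{s}x_s,0\}$ acts as $x\mapsto c+P_1x$ on the region $x_1\ge x_2$ (when the maxima with $0$ are attained by the first argument), and as $x\mapsto c+P_2x$ on the region $x_2\ge x_1$; here $\hat P=(p_{ij})$. *)

theory Defs
  imports "HOL-Analysis.Analysis"
begin

text \<open>2x2 matrices as real^2^2; row i is A $ i, entry (i,j) is A $ i $ j.\<close>

definition mat2 :: "real \<Rightarrow> real \<Rightarrow> real \<Rightarrow> real \<Rightarrow> real^2^2" where
  "mat2 a b c d = (\<chi> i j. if i = 1 then (if j = 1 then a else b) else (if j = 1 then c else d))"

definition vec2 :: "real \<Rightarrow> real \<Rightarrow> real^2" where
  "vec2 a b = (\<chi> i. if i = 1 then a else b)"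

definition Pone :: "real \<Rightarrow> real \<Rightarrow> real \<Rightarrow> real \<Rightarrow> real \<Rightarrow> real \<Rightarrow> real^2^2" where
  "Pone p11 p12 p21 p22 e1 e2 = mat2 (p11 - e1) p12 (p21 - e2) p22"

definition Ptwo :: "real \<Rightarrow> real \<Rightarrow> real \<Rightarrow> real \<Rightarrow> real \<Rightarrow> real \<Rightarrow> real^2^2" where
  "Ptwo p11 p12 p21 p22 e1 e2 = mat2 p11 (p12 - e1) p21 (p22 - e2)"

end

theory Submission
  imports Defs
begin

lemma solve_eq:
  fixes A :: "real^2^2"
  assumes "det A > 0" "x = matrix_inv A *v v"
  shows "A *v x = v"
proof -
  have "invertible A" using assms(1) by (simp add: invertible_det_nz)
  then have "A ** matrix_inv A = mat 1"
    unfolding invertible_def matrix_inv_def by (rule someI_ex[THEN conjunct1])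
  then show ?thesis using assms(2) by (simp add: matrix_vector_mul_assoc)
qed

lemma vec2_eq: "(z::real^2) = w \<longleftrightarrow> z$1 = w$1 \<and> z$2 = w$2"
  by (metis (mono_tags) exhaust_2 vec_eq_iff)

theorem mainTheorem8:
  fixes p11 p12 p21 p22 e1 e2 c1 c2 :: real
  assumes "p11 \<ge> 0" "p12 \<ge> 0" "p21 \<ge> 0" "p22 \<ge> 0"
    and "p11 + p12 \<le> 1" "p21 + p22 \<le> 1"
    and "e1 \<ge> 0" "e2 \<ge> 0"
    and "det (mat 1 - Pone p11 p12 p21 p22 e1 e2) > 0"
    and "det (mat 1 - Ptwo p11 p12 p21 p22 e1 e2) > 0"
    and "x = matrix_inv (mat 1 - Pone p11 p12 p21 p22 e1 e2) *v vec2 c1 c2"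
    and "y = matrix_inv (mat 1 - Ptwo p11 p12 p21 p22 e1 e2) *v vec2 c1 c2"
    and "x $ 1 \<ge> x $ 2" and "y $ 2 \<ge> y $ 1"
  shows "x = y \<and> x $ 1 = x $ 2"
proof -
  have ex: "(mat 1 - Pone p11 p12 p21 p22 e1 e2) *v x = vec2 c1 c2"
    using solve_eq assms(9,11) by blast
  have ey: "(mat 1 - Ptwo p11 p12 p21 p22 e1 e2) *v y = vec2 c1 c2"
    using solve_eq assms(10,12) by blast
  have D1: "(1-p11+e1)*(1-p22) - p12*(p21-e2) > 0"
    using assms(9) by (simp add: det_2 Pone_def mat2_def mat_def algebra_simps)
  have D2: "(1-p11)*(1-p22+e2) - (p12-e1)*p21 > 0"
    using assms(10) by (simp add: det_2 Ptwo_def mat2_def mat_def algebra_simps)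
  have E1: "(1-p11+e1)*x$1 - p12*x$2 = c1" "(e2-p21)*x$1 + (1-p22)*x$2 = c2"
    using ex by (simp_all add: vec2_eq matrix_vector_mult_def sum_2 Pone_def mat2_def mat_def vec2_def algebra_simps)
  have E2: "(1-p11)*y$1 + (e1-p12)*y$2 = c1" "(-p21)*y$1 + (1-p22+e2)*y$2 = c2"
    using ey by (simp_all add: vec2_eq matrix_vector_mult_def sum_2 Ptwo_def mat2_def mat_def vec2_def algebra_simps)
  define K where "K = (1-p21-p22+e2)*c1 - (1-p11-p12+e1)*c2"
  have k1: "((1-p11+e1)*(1-p22) - p12*(p21-e2)) * (x$1 - x$2) = K"
    unfolding K_def E1(1)[symmetric] E1(2)[symmetric] by (simp add: algebra_simps)
  have k2: "((1-p11)*(1-p22+e2) - (p12-e1)*p21) * (y$2 - y$1) = - K"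
    unfolding K_def E2(1)[symmetric] E2(2)[symmetric] by (simp add: algebra_simps)
  have "K \<ge> 0" using k1 D1 assms(13) by (metis diff_ge_0_iff_ge less_imp_le mult_nonneg_nonneg)
  moreover have "-K \<ge> 0" using k2 D2 assms(14) by (metis diff_ge_0_iff_ge less_imp_le mult_nonneg_nonneg)
  ultimately have K0: "K = 0" by simp
  then have xx: "x$1 = x$2" using k1 D1 by simp
  have yy: "y$1 = y$2" using k2 D2 K0 by simp
  have f1: "(1-p11-p12+e1)*x$1 = c1" "(1-p21-p22+e2)*x$1 = c2" using E1 xx by (simp_all add: algebra_simps)
  have f2: "(1-p11-p12+e1)*y$1 = c1" "(1-p21-p22+e2)*y$1 = c2" using E2 yy by (simp_all add: algebra_simps)
  have "(1-p11-p12+e1)*(x$1 - y$1) = 0" using f1 f2 by (simp add: right_diff_distrib)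
  moreover have "(1-p21-p22+e2)*(x$1 - y$1) = 0" using f1 f2 by (simp add: right_diff_distrib)
  ultimately have "x$1 = y$1"
  proof -
    assume a: "(1-p11-p12+e1)*(x$1 - y$1) = 0" "(1-p21-p22+e2)*(x$1 - y$1) = 0"
    show ?thesis
    proof (rule ccontr)
      assume "x$1 \<noteq> y$1"
      then have "1-p11-p12+e1 = 0" "1-p21-p22+e2 = 0" using a by auto
      then show False using D1 assms by (smt (verit) mult_nonneg_nonneg)
    qed
  qed
  then show ?thesis using xx yy vec2_eq by metis
qed

end
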